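(* For any finite set of distinct time-frequency points $\Sigma=\{\sigma_1,\ldots,\sigma_N\}\subset\mathbb{R}^{2d}$ there is a function $g\in L^2(\mathbb{R}^d)$ such that $\{U_{\sigma_k}g: 1\le k\le N\}$ is an orthonormal set.
   Context: For $\lambda=(t,\omega)\in\mathbb{R}^d\times\mathbb{R}^d$, $U_{(t,\omega)}f(x)=e^{i\langle\omega,x\rangle}f(x-t)$ on $L^2(\mathbb{R}^d)$. *)

theory Defs
  imports "HOL-Analysis.Analysis"
begin

definition L2 :: "(real^'d \<Rightarrow> complex) set" where
  "L2 = {f. f \<in> borel_measurable lebesgue \<and> integrable lebesgue (\<lambda>x. (cmod (f x))^2)}"

definition L2_inner :: "(real^'d \<Rightarrow> complex) \<Rightarrow> (real^'d \<Rightarrow> complex) \<Rightarrow> complex" where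
  "L2_inner f g = (LINT x|lebesgue. f x * cnj (g x))"

definition tf_shift :: "(real^'d) \<times> (real^'d) \<Rightarrow> (real^'d \<Rightarrow> complex) \<Rightarrow> real^'d \<Rightarrow> complex" where
  "tf_shift p f x = exp (\<i> * complex_of_real (snd p \<bullet> x)) * f (x - fst p)"

end

theory Submission
  imports Defs
begin

definition ee :: "'a::euclidean_space \<Rightarrow> 'a \<Rightarrow> complex" where
  "ee d x = exp (\<i> * complex_of_real (d \<bullet> x))"

lemma ee_add: "ee d (a + b) = ee d a * ee d b"
  by (simp add: ee_def inner_add_right distrib_left exp_add)

lemma norm_ee [simp]: "norm (ee d x) = 1"
  by (simp add: ee_def)

lemma ee_meas [measurable]: "ee d \<in> borel_measurable borel"
  unfolding ee_def by (intro borel_measurable_continuous_onI continuous_intros)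

lemma trans_int:
  fixes f :: "'a::euclidean_space \<Rightarrow> complex"
  assumes "f \<in> borel_measurable borel"
  shows "integral\<^sup>L lborel f = integral\<^sup>L lborel (\<lambda>x. f (c + x))"
proof -
  have "integral\<^sup>L lborel f = integral\<^sup>L (distr lborel borel ((+) c)) f"
    by (simp add: lborel_distr_plus)
  also have "\<dots> = integral\<^sup>L lborel (\<lambda>x. f (c + x))"
    by (rule integral_distr) (use assms in auto)
  finally show ?thesis .
qed

lemma int_ind_ee:
  fixes S :: "'a::euclidean_space set"
  assumes "open S" "bounded S"
  shows "integrable lborel (\<lambda>x. (indicator S x :: complex) * ee d x)"
proof -
  have S: "S \<in> sets borel" using assms by auto
  have 1: "integrable lborel (indicator S :: 'a \<Rightarrow> real)"
    using S emeasure_bounded_finite[OF assms(2)] by auto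
  have 2: "(\<lambda>x. (indicator S x :: complex) * ee d x) \<in> borel_measurable lborel"
    using S by measurable
  have 3: "AE x in lborel. norm ((indicator S x :: complex) * ee d x) \<le> norm (indicator S x :: real)"
    by (auto simp: indicator_def norm_mult)
  show ?thesis by (rule Bochner_Integration.integrable_bound[OF 1 2 3])
qed

lemma build:
  fixes T :: "'a::euclidean_space set" and r :: real
  assumes T: "finite T" and r: "r > 0" "\<forall>D\<in>T. 2 * r < norm D"
  shows "(\<forall>d\<in>set ds. d \<noteq> 0) \<Longrightarrow> \<exists>S. open S \<and> bounded S \<and> ball 0 r \<subseteq> S \<and>
     (\<forall>D\<in>T. \<forall>x\<in>S. x + D \<notin> S) \<and>
     (\<forall>d\<in>set ds. integral\<^sup>L lborel (\<lambda>x. (indicator S x :: complex) * ee d x) = 0)"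
proof (induction ds)
  case Nil
  show ?case
  proof (intro exI conjI ballI)
    show "open (ball (0::'a) r)" "bounded (ball (0::'a) r)" by auto
    fix D x assume D: "D \<in> T" and x: "x \<in> ball (0::'a) r"
    show "x + D \<notin> ball 0 r"
    proof
      assume "x + D \<in> ball 0 r"
      then have "norm (x + D) < r" by simp
      moreover have "norm x < r" using x by simp
      moreover have "norm D \<le> norm (x + D) + norm x"
        using norm_triangle_ineq4[of "x + D" x] by simp
      ultimately show False using r D by auto
    qed
  qed auto
next
  case (Cons d ds)
  then obtain S where S: "open S" "bounded S" "ball 0 r \<subseteq> S"
      "\<forall>D\<in>T. \<forall>x\<in>S. x + D \<notin> S"
      "\<forall>d\<in>set ds. integral\<^sup>L lborel (\<lambda>x. (indicator S x :: complex) * ee d x) = 0"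
    by auto
  have d0: "d \<noteq> 0" using Cons.prems by auto
  obtain R where R: "\<forall>x\<in>S. norm x \<le> R" using S(2) bounded_iff by blast
  define M where "M = 2 * R + (\<Sum>D\<in>T. norm D) + 1"
  have MD: "norm D \<le> (\<Sum>D\<in>T. norm D)" if "D \<in> T" for D
    using member_le_sum[OF that _ T, of norm] by simp
  obtain m :: nat where m: "M * norm d / pi < real m" using reals_Archimedean2 by blast
  define s where "s = (2 * real m + 1) * pi / (norm d)^2"
  define v where "v = s *\<^sub>R d"
  have nd: "norm d > 0" using d0 by simp
  have nv: "norm v = (2 * real m + 1) * pi / norm d"
    using nd by (simp add: v_def s_def power2_eq_square)
  have "M < real m * pi / norm d" using m nd pi_gt_zero
    by (simp add: field_simps)
  also have "\<dots> \<le> norm v" unfolding nv using nd pi_gt_zero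
    by (intro divide_right_mono) (auto simp: field_simps)
  finally have Mv: "M < norm v" .
  have dv: "d \<bullet> v = (2 * real m + 1) * pi"
    using nd by (simp add: v_def s_def power2_norm_eq_inner)
  have eev: "ee d v = -1"
  proof -
    have e1: "\<i> * complex_of_real ((2 * real m + 1) * pi) = of_nat m * (2 * pi * \<i>) + pi * \<i>"
      by (simp add: algebra_simps)
    have "ee d v = exp (of_nat m * (2 * pi * \<i>)) * exp (pi * \<i>)"
      unfolding ee_def dv e1 by (simp add: exp_add)
    also have "\<dots> = -1" by (simp add: exp_of_nat_mult exp_two_pi_i exp_pi_i)
    finally show ?thesis .
  qed
  define S' where "S' = S \<union> (\<lambda>x. v + x) ` S"
  have far: False if "x \<in> S" "y \<in> S" "norm (v - (x - y)) \<le> norm D" "D \<in> T \<or> D = 0" for x y D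
  proof -
    have "norm v \<le> norm (v - (x - y)) + norm (x - y)" using norm_triangle_sub[of v "x - y"] by simp
    moreover have "norm (x - y) \<le> norm x + norm y" by (rule norm_triangle_ineq4)
    moreover have "norm x \<le> R" "norm y \<le> R" using R that by auto
    ultimately have "norm v \<le> norm D + R + R" using that(3) by linarith
    moreover have "norm D \<le> (\<Sum>D\<in>T. norm D)" using that(4) MD sum_nonneg[of T norm] by auto
    ultimately show False using Mv unfolding M_def by simp
  qed
  have disj: "S \<inter> (\<lambda>x. v + x) ` S = {}"
  proof (rule ccontr)
    assume "S \<inter> (\<lambda>x. v + x) ` S \<noteq> {}"
    then obtain x y where "x \<in> S" "y \<in> S" "x = v + y" by auto
    then show False using far[of x y 0] by auto
  qed
  have indS': "(indicator S' x :: complex) = indicator S x + indicator S (x - v)" for x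
  proof -
    have "x - v \<in> S \<longleftrightarrow> x \<in> (\<lambda>x. v + x) ` S"
      by (auto simp: image_iff algebra_simps) (metis diff_add_cancel)
    then show ?thesis using disj unfolding S'_def by (auto simp: indicator_def)
  qed
  have Sb: "S \<in> sets borel" using S(1) by auto
  have key: "integral\<^sup>L lborel (\<lambda>x. (indicator S' x :: complex) * ee e x)
     = (1 + ee e v) * integral\<^sup>L lborel (\<lambda>x. (indicator S x :: complex) * ee e x)" for e
  proof -
    have "integral\<^sup>L lborel (\<lambda>x. (indicator S' x :: complex) * ee e x)
      = integral\<^sup>L lborel (\<lambda>x. (indicator S x :: complex) * ee e x + (indicator S (x - v) :: complex) * ee e x)"
      by (simp add: indS' distrib_right)
    also have "\<dots> = integral\<^sup>L lborel (\<lambda>x. (indicator S x :: complex) * ee e x)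
       + integral\<^sup>L lborel (\<lambda>x. (indicator S (x - v) :: complex) * ee e x)"
    proof (rule Bochner_Integration.integral_add)
      show "integrable lborel (\<lambda>x. (indicator S x :: complex) * ee e x)"
        using int_ind_ee S by blast
      have "open ((\<lambda>x. v + x) ` S)" "bounded ((\<lambda>x. v + x) ` S)"
        using S by (auto intro: open_translation bounded_translation)
      from int_ind_ee[OF this, of e]
      show "integrable lborel (\<lambda>x. (indicator S (x - v) :: complex) * ee e x)"
        using indS' disj unfolding S'_def
        by (smt (verit, best) Bochner_Integration.integrable_cong add_diff_cancel_left' diff_add_cancel
            image_eqI imageE indicator_simps(1,2))
    qed
    also have "integral\<^sup>L lborel (\<lambda>x. (indicator S (x - v) :: complex) * ee e x)
       = integral\<^sup>L lborel (\<lambda>x. (indicator S (v + x - v) :: complex) * ee e (v + x))"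
      by (rule trans_int) (use Sb in measurable)
    also have "\<dots> = ee e v * integral\<^sup>L lborel (\<lambda>x. (indicator S x :: complex) * ee e x)"
    proof -
      have "(\<lambda>x. (indicator S (v + x - v) :: complex) * ee e (v + x))
          = (\<lambda>x. ee e v * ((indicator S x :: complex) * ee e x))"
        by (simp add: ee_add fun_eq_iff mult.commute mult.left_commute)
      then show ?thesis by (simp only: integral_mult_right_zero)
    qed
    finally show ?thesis by (simp add: distrib_right)
  qed
  show ?case
  proof (intro exI conjI ballI)
    show "open S'" unfolding S'_def using S by (auto intro: open_translation)
    show "bounded S'" unfolding S'_def using S by (auto intro: bounded_translation)
    show "ball 0 r \<subseteq> S'" unfolding S'_def using S by auto
  next
    fix D x assume D: "D \<in> T" and x: "x \<in> S'"
    show "x + D \<notin> S'"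
    proof
      assume xD: "x + D \<in> S'"
      show False
      proof (cases "x \<in> S")
        case True
        show False
        proof (cases "x + D \<in> S")
          case True then show False using S(4) D \<open>x \<in> S\<close> by auto
        next
          case False
          then obtain y where y: "y \<in> S" "x + D = v + y" using xD unfolding S'_def by auto
          then have "v - (x - y) = D" by (simp add: algebra_simps)
          then show False using far[OF \<open>x \<in> S\<close> y(1), of D] D by simp
        qed
      next
        case False
        then obtain y where y: "y \<in> S" "x = v + y" using x unfolding S'_def by auto
        show False
        proof (cases "x + D \<in> S")
          case True
          have "v - (x + D - y) = - D" using y by (simp add: algebra_simps)
          then show False using far[OF True y(1), of D] D by simp
        next
          case False
          then obtain z where z: "z \<in> S" "x + D = v + z" using xD unfolding S'_def by auto
          then have "y + D = z" using y by (simp add: algebra_simps)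
          then show False using S(4) D y z by auto
        qed
      qed
    qed
  next
    fix e assume "e \<in> set (d # ds)"
    then show "integral\<^sup>L lborel (\<lambda>x. (indicator S' x :: complex) * ee e x) = 0"
      using key S(5) eev by auto
  qed
qed

theorem lemma2:
  fixes \<Sigma> :: "((real^'d) \<times> (real^'d)) set"
  assumes "finite \<Sigma>"
  shows "\<exists>g \<in> (L2 :: (real^'d \<Rightarrow> complex) set).
           \<forall>\<sigma>\<in>\<Sigma>. \<forall>\<tau>\<in>\<Sigma>. L2_inner (tf_shift \<sigma> g) (tf_shift \<tau> g) = (if \<sigma> = \<tau> then 1 else 0)"
proof -
  define T where "T = (\<lambda>(\<sigma>, \<tau>). fst \<sigma> - fst \<tau>) ` (\<Sigma> \<times> \<Sigma>) - {0}"
  define Dl where "Dl = (\<lambda>(\<sigma>, \<tau>). snd \<sigma> - snd \<tau>) ` (\<Sigma> \<times> \<Sigma>) - {0}"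
  have fT: "finite T" unfolding T_def using assms by auto
  have fD: "finite Dl" unfolding Dl_def using assms by auto
  obtain ds where ds: "set ds = Dl" using finite_list[OF fD] by blast
  define r where "r = Min (insert 1 (norm ` T)) / 3"
  have Mpos: "Min (insert 1 (norm ` T)) > 0"
    using fT by (subst Min_gr_iff) (auto simp: T_def)
  have r0: "r > 0" unfolding r_def using Mpos by simp
  have rT: "\<forall>D\<in>T. 2 * r < norm D"
  proof
    fix D assume "D \<in> T"
    then have "Min (insert 1 (norm ` T)) \<le> norm D" using fT by (intro Min_le) auto
    then show "2 * r < norm D" unfolding r_def using Mpos by simp
  qed
  have "\<forall>d\<in>set ds. d \<noteq> 0" using ds unfolding Dl_def by auto
  from build[OF fT r0 rT this] obtain S where S: "open S" "bounded S" "ball 0 r \<subseteq> S"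
      "\<forall>D\<in>T. \<forall>x\<in>S. x + D \<notin> S"
      "\<forall>d\<in>set ds. integral\<^sup>L lborel (\<lambda>x. (indicator S x :: complex) * ee d x) = 0"
    by blast
  have Sb: "S \<in> sets borel" using S(1) by auto
  have fin: "emeasure lborel S < \<infinity>" using emeasure_bounded_finite[OF S(2)] .
  define \<mu> where "\<mu> = measure lborel S"
  have "measure lborel (ball (0::real^'d) r) \<le> \<mu>"
    unfolding \<mu>_def using S(3) Sb fin by (intro measure_mono_fmeasurable) (auto intro: fmeasurableI)
  then have mu0: "\<mu> > 0" using content_ball_pos[OF r0, of "0::real^'d"] by linarith
  define c where "c = 1 / sqrt \<mu>"
  define g :: "real^'d \<Rightarrow> complex" where "g x = complex_of_real c * indicator S x" for x
  have gL2: "g \<in> L2"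
  proof -
    have "g \<in> borel_measurable lborel" unfolding g_def using Sb by measurable
    then have m1: "g \<in> borel_measurable lebesgue"
      by (rule measurable_completion)
    have "(\<lambda>x. (cmod (g x))^2) = (\<lambda>x. c^2 * indicator S x)"
      by (auto simp: g_def indicator_def fun_eq_iff norm_mult)
    moreover have "integrable lebesgue (\<lambda>x. c^2 * indicator S x :: real)"
      using Sb fin by (intro integrable_mult_right) auto
    ultimately show ?thesis unfolding L2_def using m1 by auto
  qed
  show ?thesis
  proof (intro bexI[OF _ gL2] ballI)
    fix \<sigma> \<tau> assume \<sigma>: "\<sigma> \<in> \<Sigma>" and \<tau>: "\<tau> \<in> \<Sigma>"
    obtain t w where tw: "\<sigma> = (t, w)" by fastforce
    obtain t' w' where tw': "\<tau> = (t', w')" by fastforce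
    show "L2_inner (tf_shift \<sigma> g) (tf_shift \<tau> g) = (if \<sigma> = \<tau> then 1 else 0)"
    proof (cases "t = t'")
      case False
      have "tf_shift \<sigma> g x * cnj (tf_shift \<tau> g x) = 0" for x
      proof -
        have "t - t' = (\<lambda>(\<sigma>, \<tau>). fst \<sigma> - fst \<tau>) (\<sigma>, \<tau>)" by (simp add: tw tw')
        moreover have "(\<sigma>, \<tau>) \<in> \<Sigma> \<times> \<Sigma>" using \<sigma> \<tau> by simp
        ultimately have "t - t' \<in> (\<lambda>(\<sigma>, \<tau>). fst \<sigma> - fst \<tau>) ` (\<Sigma> \<times> \<Sigma>)" by blast
        then have tT: "t - t' \<in> T" using False unfolding T_def by simp
        have "(x - t) + (t - t') = x - t'" by simp
        then have "\<not> (x - t \<in> S \<and> x - t' \<in> S)" using S(4) tT by metis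
        then show ?thesis by (auto simp: tf_shift_def g_def tw tw' indicator_def)
      qed
      then have "(\<lambda>x. tf_shift \<sigma> g x * cnj (tf_shift \<tau> g x)) = (\<lambda>x. 0)" by (rule ext)
      then have "L2_inner (tf_shift \<sigma> g) (tf_shift \<tau> g) = 0" unfolding L2_inner_def by simp
      then show ?thesis using False tw tw' by simp
    next
      case True
      define d where "d = w - w'"
      have eq: "tf_shift \<sigma> g x * cnj (tf_shift \<tau> g x)
          = complex_of_real (c^2) * ((indicator S (x - t) :: complex) * ee d x)" for x
      proof -
        have "cnj (exp (\<i> * complex_of_real (w' \<bullet> x))) = exp (- (\<i> * complex_of_real (w' \<bullet> x)))"
          by (simp add: exp_cnj)
        moreover have "exp (\<i> * complex_of_real (w \<bullet> x)) * exp (- (\<i> * complex_of_real (w' \<bullet> x)))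
            = exp (\<i> * complex_of_real (w \<bullet> x) + - (\<i> * complex_of_real (w' \<bullet> x)))"
          by (rule exp_add[symmetric])
        moreover have "\<i> * complex_of_real (w \<bullet> x) + - (\<i> * complex_of_real (w' \<bullet> x))
            = \<i> * complex_of_real (d \<bullet> x)"
          by (simp add: d_def inner_diff_left right_diff_distrib)
        ultimately have "exp (\<i> * complex_of_real (w \<bullet> x)) * cnj (exp (\<i> * complex_of_real (w' \<bullet> x))) = ee d x"
          by (simp add: ee_def)
        then show ?thesis using True
          by (auto simp: tf_shift_def g_def tw tw' indicator_def power2_eq_square)
      qed
      have "L2_inner (tf_shift \<sigma> g) (tf_shift \<tau> g)
          = integral\<^sup>L lebesgue (\<lambda>x. complex_of_real (c^2) * ((indicator S (x - t) :: complex) * ee d x))"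
        unfolding L2_inner_def eq ..
      also have "\<dots> = integral\<^sup>L lborel (\<lambda>x. complex_of_real (c^2) * ((indicator S (x - t) :: complex) * ee d x))"
        by (rule integral_completion) (use Sb in measurable)
      also have "\<dots> = integral\<^sup>L lborel (\<lambda>x. complex_of_real (c^2) * ((indicator S (t + x - t) :: complex) * ee d (t + x)))"
        by (rule trans_int) (use Sb in measurable)
      also have "\<dots> = complex_of_real (c^2) * ee d t * integral\<^sup>L lborel (\<lambda>x. (indicator S x :: complex) * ee d x)"
      proof -
        have "(\<lambda>x. complex_of_real (c^2) * ((indicator S (t + x - t) :: complex) * ee d (t + x)))
           = (\<lambda>x. (complex_of_real (c^2) * ee d t) * ((indicator S x :: complex) * ee d x))"
          by (simp add: ee_add fun_eq_iff mult.commute mult.left_commute)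
        then show ?thesis by (simp only: integral_mult_right_zero)
      qed
      finally have I: "L2_inner (tf_shift \<sigma> g) (tf_shift \<tau> g) = \<dots>" .
      show ?thesis
      proof (cases "w = w'")
        case True
        have "integral\<^sup>L lborel (\<lambda>x. (indicator S x :: complex) * ee d x)
            = integral\<^sup>L lborel (\<lambda>x. complex_of_real (indicator S x))"
        proof -
          have "(\<lambda>x. (indicator S x :: complex) * ee d x) = (\<lambda>x. complex_of_real (indicator S x))"
            using True by (simp add: d_def ee_def indicator_def fun_eq_iff)
          then show ?thesis by (simp only:)
        qed
        also have "\<dots> = complex_of_real \<mu>" using Sb fin by (simp add: \<mu>_def)
        finally have "L2_inner (tf_shift \<sigma> g) (tf_shift \<tau> g) = complex_of_real (c^2 * \<mu>)"
          using I True by (simp add: d_def ee_def)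
        moreover have "c^2 * \<mu> = 1" using mu0 by (simp add: c_def power_divide)
        ultimately show ?thesis using tw tw' True \<open>t = t'\<close> by simp
      next
        case False
        have "d \<in> set ds" using False \<sigma> \<tau> ds unfolding Dl_def d_def tw tw' by force
        then show ?thesis using I S(5) False tw tw' by simp
      qed
    qed
  qed
qed

end
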